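(* Let $X$ be a finite quasi-metric space, i.e.\ a finite set $X$ with a function $d:X\times X\to[0,\infty)$ such that $d(x,x)=0$, $d(x,z)\le d(x,y)+d(y,z)$ for all $x,y,z$, and $d(x,y)>0$ whenever $x\neq y$ ($d$ need not be symmetric). Then the $X\times X$ matrix $Z_X$ with entries $Z_X(x,y)=q^{d(x,y)}$ is invertible over the field $\mathbb{Q}(q^{\mathbb{R}})$ of generalized rational functions; that is, $X$ has Möbius inversion over $\mathbb{Q}(q^{\mathbb{R}})$.
   Context: The ring $\mathbb{Z}[q^{[0,\infty)}]$ of generalized polynomials consists of finite formal sums $\sum_i a_i q^{\ell_i}$ with $a_i\in\mathbb{Z}$, $\ell_i\in[0,\infty)$, with multiplication determined by $q^{\ell}q^{k}=q^{\ell+k}$; it is an integral domain, and $\mathbb{Q}(q^{\mathbb{R}})$ denotes its field of fractions (quotients of finite sums $\sum a_i q^{\ell_i}$ with $a_i\in\mathbb{Q}$, $\ell_i\in\mathbb{R}$). A finite enriched category $X$ "has Möbius inversion" when its zeta matrix $Z_X$ is invertible; for a quasi-metric space the zeta matrix is $Z_X(x,y)=q^{d(x,y)}$. Matrices are indexed by the finite set $X$ for rows and columns. *)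

theory Defs
  imports "HOL-Analysis.Analysis" "HOL-Library.Poly_Mapping" "HOL-Computational_Algebra.Fraction_Field"
begin

text \<open>Generalized Laurent polynomials: finite formal sums of a_i q^l_i with rational
  coefficients and real exponents, realised as the monoid algebra of (real,+) over rat
  (finitely supported maps real => rat, convolution product).  This is an integral domain;
  its field of fractions is the field Q(q^R) of generalized rational functions.\<close>

type_synonym genpoly = "real \<Rightarrow>\<^sub>0 rat"
type_synonym genrat = "genpoly fract"

definition qpow :: "real \<Rightarrow> genrat" where
  "qpow l = Fract (Poly_Mapping.single l 1) 1"

text \<open>Finite quasi-metric space: the points are the elements of a finite type 'a.\<close>
definition quasi_metric :: "('a \<Rightarrow> 'a \<Rightarrow> real) \<Rightarrow> bool" where
  "quasi_metric d \<longleftrightarrow>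
     (\<forall>x y. 0 \<le> d x y) \<and> (\<forall>x. d x x = 0) \<and>
     (\<forall>x y z. d x z \<le> d x y + d y z) \<and> (\<forall>x y. x \<noteq> y \<longrightarrow> 0 < d x y)"

definition zeta_matrix :: "('a::finite \<Rightarrow> 'a \<Rightarrow> real) \<Rightarrow> genrat ^ 'a ^ 'a" where
  "zeta_matrix d = (\<chi> x y. qpow (d x y))"

end

theory Submission
  imports Defs
begin

definition FF :: "genpoly \<Rightarrow> genrat" where "FF p = Fract p 1"

lemma FF_add: "FF a + FF b = FF (a + b)"
  by (simp add: FF_def)

lemma FF_sum: "finite S \<Longrightarrow> (\<Sum>x\<in>S. FF (f x)) = FF (\<Sum>x\<in>S. f x)"
  by (induct S rule: finite_induct) (auto simp: FF_add Zero_fract_def FF_def)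

lemma FF_mult: "FF a * FF b = FF (a * b)"
  by (simp add: FF_def)

lemma qpow_add: "qpow a * qpow b = qpow (a + b)"
  by (simp add: qpow_def mult_single)

lemma qpow_zero: "qpow 0 = 1"
  by (simp add: qpow_def One_fract_def)

lemma qpow_sum: "finite S \<Longrightarrow> (\<Prod>x\<in>S. qpow (f x)) = qpow (\<Sum>x\<in>S. f x)"
  by (induct S rule: finite_induct) (auto simp: qpow_zero qpow_add)

lemma FF_of_int: "FF (of_int c) = of_int c"
proof (induct c rule: int_induct[where k=0])
  case base
  then show ?case by (simp add: FF_def Zero_fract_def)
next
  case (step1 i)
  have "FF (of_int (i+1)) = FF (of_int i) + FF 1"
    by (simp add: FF_add)
  also have "\<dots> = of_int i + 1" using step1 by (simp add: FF_def One_fract_def)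
  finally show ?case by simp
next
  case (step2 i)
  have "FF (of_int (i-1)) = FF (of_int i) + FF (-1)"
    by (simp add: FF_add)
  also have "\<dots> = of_int i - 1" using step2 by (simp add: FF_def One_fract_def)
  finally show ?case by simp
qed

lemma FF_term: "FF (Poly_Mapping.single s (of_int c)) = of_int c * qpow s"
proof -
  have "Poly_Mapping.single s (of_int c) = Poly_Mapping.single 0 (of_int c) * Poly_Mapping.single s (1::rat)"
    by (simp only: mult_single) simp
  also have "\<dots> = of_int c * Poly_Mapping.single s 1" by (simp only: single_of_int)
  finally have e: "Poly_Mapping.single s (of_int c) = of_int c * Poly_Mapping.single s (1::rat)" .
  show ?thesis unfolding e FF_mult[symmetric] FF_of_int by (simp add: qpow_def FF_def)
qed

theorem theorem2p10:
  fixes d :: "'a::finite \<Rightarrow> 'a \<Rightarrow> real"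
  assumes "quasi_metric d"
  shows "invertible (zeta_matrix d)"
proof -
  define S where "S p = (\<Sum>i\<in>UNIV. d i (p i))" for p :: "'a \<Rightarrow> 'a"
  define P where "P = (\<Sum>p\<in>{p. p permutes (UNIV::'a set)}. Poly_Mapping.single (S p) (of_int (sign p) :: rat))"
  have "det (zeta_matrix d) = (\<Sum>p\<in>{p. p permutes (UNIV::'a set)}. of_int (sign p) * qpow (S p))"
    unfolding det_def zeta_matrix_def S_def by (simp add: qpow_sum)
  also have "\<dots> = FF P"
    unfolding P_def by (subst FF_sum[symmetric]) (auto simp: FF_term finite_permutations)
  finally have det: "det (zeta_matrix d) = FF P" .
  have key: "(of_int (sign p) when S p = 0) = (if p = id then 1 else (0::rat))"
    if "p permutes (UNIV::'a set)" for p
  proof (cases "p = id")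
    case True
    then show ?thesis using assms by (simp add: S_def quasi_metric_def sign_id)
  next
    case False
    then obtain x where x: "p x \<noteq> x" by (meson eq_id_iff)
    have "0 < S p" unfolding S_def
      using assms x by (intro sum_pos2[of UNIV x]) (auto simp: quasi_metric_def)
    then show ?thesis using False by simp
  qed
  have "Poly_Mapping.lookup P 0 = (\<Sum>p\<in>{p. p permutes (UNIV::'a set)}. (if p = id then 1 else (0::rat)))"
    unfolding P_def Poly_Mapping.lookup_sum Poly_Mapping.lookup_single by (intro sum.cong) (auto simp: key)
  also have "\<dots> = 1" by (simp add: finite_permutations permutes_id)
  finally have "P \<noteq> 0" by auto
  then have "FF P \<noteq> 0" by (simp add: FF_def Zero_fract_def eq_fract)
  then show ?thesis by (simp add: invertible_det_nz det)
qed

end
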